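(* Let $A$ be a densely defined closed operator in a complex Hilbert space $\mathcal{H}$ such that $\operatorname{Num}(A)$ has an interior point, $\operatorname{Num}(A)\neq\mathbb{C}$, and $\operatorname{D}(A)\subset\operatorname{D}(A^* )$. If $\lambda\in\partial\operatorname{Num}(A)$ is a point of unilateral infinite curvature of $\partial\overline{\operatorname{Num}}(A)$, then $\lambda\in\sigma(A)$.
   Context: $\operatorname{Num}(A)=\{\langle Af,f\rangle: f\in\operatorname{D}(A),\|f\|=1\}$ is the numerical range, $\overline{\operatorname{Num}}(A)$ its closure, $A^*$ the adjoint, $\sigma(A)$ the spectrum. Curvature conventions. Let $\Omega\subset\mathbb{C}$ be a closed convex set with nonempty interior and $\lambda\in\partial\Omega$. There is at least one supporting line of $\Omega$ through $\lambda$; $\lambda$ is called a corner point if there is more than one. If $\lambda$ is a corner point, $\Omega$ lies in a closed sector with vertex $\lambda$ and semivertical angle $<\pi/2$; take the smallest such sector and let $l_\lambda$ be the supporting line through $\lambda$ orthogonal to the axis of this sector; otherwise $l_\lambda$ is the unique supporting line. Use rectangular coordinates $(\xi,\eta)$ with origin at $\lambda$, $\xi$-axis equal to $l_\lambda$, oriented so that $\Omega\subset\{\eta\ge 0\}$. Let $D'_\varepsilon=\{(\xi,\eta):\xi^2+\eta^2\le\varepsilon^2,\ \xi\neq 0\}$. Define $\gamma_u^+(\lambda)=\lim_{\varepsilon\downarrow 0}\sup\{\eta/\xi^2:(\xi,\eta)\in\partial\Omega\cap D'_\varepsilon,\ \xi>0\}$ and $\gamma_l^+(\lambda)$ the same with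 $\inf$ in place of $\sup$; $\gamma_u^-(\lambda),\gamma_l^-(\lambda)$ are defined analogously with $\xi<0$. Set $\gamma_u(\lambda)=\max(\gamma_u^+(\lambda),\gamma_u^-(\lambda))$, $\gamma_l(\lambda)=\min(\gamma_l^+(\lambda),\gamma_l^-(\lambda))$. The point $\lambda$ is of infinite upper curvature if $\gamma_u(\lambda)=\infty$, and of unilateral infinite curvature if $\gamma_l^+(\lambda)=\infty$ or $\gamma_l^-(\lambda)=\infty$. For an operator $A$, these notions at $\lambda\in\partial\operatorname{Num}(A)$ refer to $\Omega=\overline{\operatorname{Num}}(A)$. *)

theory Defs
  imports "HOL-Analysis.Analysis"
begin

class complex_vector = real_vector +
  fixes scaleC :: "complex \<Rightarrow> 'a \<Rightarrow> 'a"
  assumes scaleC_add_right: "scaleC a (x + y) = scaleC a x + scaleC a y"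
    and scaleC_add_left: "scaleC (a + b) x = scaleC a x + scaleC b x"
    and scaleC_scaleC: "scaleC a (scaleC b x) = scaleC (a * b) x"
    and scaleC_one: "scaleC 1 x = x"
    and scaleR_scaleC: "scaleR r x = scaleC (complex_of_real r) x"

text \<open>Inner product: linear in the first argument, conjugate-linear in the second.\<close>
class complex_inner = complex_vector + real_normed_vector +
  fixes cinner :: "'a \<Rightarrow> 'a \<Rightarrow> complex"
  assumes cinner_commute: "cinner x y = cnj (cinner y x)"
    and cinner_add_left: "cinner (x + y) z = cinner x z + cinner y z"
    and cinner_scaleC_left: "cinner (scaleC c x) y = c * cinner x y"
    and cinner_self_nonneg: "0 \<le> Re (cinner x x)"
    and cinner_self_eq_zero: "cinner x x = 0 \<longleftrightarrow> x = 0"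
    and norm_eq_sqrt_cinner: "norm x = sqrt (Re (cinner x x))"

class chilbert_space = complex_inner + complete_space

section \<open>Unbounded operators: an operator is a domain D together with a map A\<close>

definition csubspace :: "'a::complex_vector set \<Rightarrow> bool" where
  "csubspace D \<longleftrightarrow> 0 \<in> D \<and> (\<forall>x\<in>D. \<forall>y\<in>D. x + y \<in> D) \<and> (\<forall>c. \<forall>x\<in>D. scaleC c x \<in> D)"

definition clinear_on :: "'a::complex_vector set \<Rightarrow> ('a \<Rightarrow> 'b::complex_vector) \<Rightarrow> bool" where
  "clinear_on D A \<longleftrightarrow> (\<forall>x\<in>D. \<forall>y\<in>D. A (x + y) = A x + A y) \<and>
                       (\<forall>c. \<forall>x\<in>D. A (scaleC c x) = scaleC c (A x))"

definition densely_defined :: "'a::complex_inner set \<Rightarrow> bool" where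
  "densely_defined D \<longleftrightarrow> closure D = UNIV"

definition closed_operator :: "'a::complex_inner set \<Rightarrow> ('a \<Rightarrow> 'a) \<Rightarrow> bool" where
  "closed_operator D A \<longleftrightarrow> closed {(x, A x) | x. x \<in> D}"

definition adj_dom :: "'a::complex_inner set \<Rightarrow> ('a \<Rightarrow> 'a) \<Rightarrow> 'a set" where
  "adj_dom D A = {y. \<exists>z. \<forall>x\<in>D. cinner (A x) y = cinner x z}"

definition Num :: "'a::complex_inner set \<Rightarrow> ('a \<Rightarrow> 'a) \<Rightarrow> complex set" where
  "Num D A = {cinner (A f) f | f. f \<in> D \<and> norm f = 1}"

definition op_resolvent :: "'a::complex_inner set \<Rightarrow> ('a \<Rightarrow> 'a) \<Rightarrow> complex set" where
  "op_resolvent D A = {l. bij_betw (\<lambda>x. A x - scaleC l x) D UNIV \<and>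
                          (\<exists>C. \<forall>x\<in>D. norm x \<le> C * norm (A x - scaleC l x))}"

definition op_spectrum :: "'a::complex_inner set \<Rightarrow> ('a \<Rightarrow> 'a) \<Rightarrow> complex set" where
  "op_spectrum D A = UNIV - op_resolvent D A"

text \<open>A supporting line through lam is described by its unit normal nu pointing into \<Omega>.\<close>
definition supporting_normal :: "complex set \<Rightarrow> complex \<Rightarrow> complex \<Rightarrow> bool" where
  "supporting_normal \<Omega> lam nu \<longleftrightarrow> cmod nu = 1 \<and> (\<forall>z\<in>\<Omega>. 0 \<le> Re (cnj nu * (z - lam)))"

definition corner_point :: "complex set \<Rightarrow> complex \<Rightarrow> bool" where
  "corner_point \<Omega> lam \<longleftrightarrow>
     (\<exists>nu1 nu2. supporting_normal \<Omega> lam nu1 \<and> supporting_normal \<Omega> lam nu2 \<and> nu1 \<noteq> nu2)"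

text \<open>Closed sector with vertex lam, unit axis direction d, semivertical angle alpha in [0, pi/2).\<close>
definition sector :: "complex \<Rightarrow> complex \<Rightarrow> real \<Rightarrow> complex set" where
  "sector lam d alpha = {z. cos alpha * cmod (z - lam) \<le> Re (cnj d * (z - lam))}"

text \<open>nu is the inward unit normal of the distinguished supporting line l_lam.\<close>
definition l_normal :: "complex set \<Rightarrow> complex \<Rightarrow> complex \<Rightarrow> bool" where
  "l_normal \<Omega> lam nu \<longleftrightarrow>
     (if corner_point \<Omega> lam then
        cmod nu = 1 \<and>
        (\<exists>alpha. 0 \<le> alpha \<and> alpha < pi/2 \<and> \<Omega> \<subseteq> sector lam nu alpha \<and>
           (\<forall>d beta. cmod d = 1 \<and> 0 \<le> beta \<and> beta < pi/2 \<and> \<Omega> \<subseteq> sector lam d beta \<longrightarrow> alpha \<le> beta))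
      else supporting_normal \<Omega> lam nu)"

text \<open>Rectangular coordinates with origin lam, xi-axis along l_lam, eta along the inward normal nu.\<close>
definition xi_coord :: "complex \<Rightarrow> complex \<Rightarrow> complex \<Rightarrow> real" where
  "xi_coord lam nu z = Re (\<i> * cnj nu * (z - lam))"

definition eta_coord :: "complex \<Rightarrow> complex \<Rightarrow> complex \<Rightarrow> real" where
  "eta_coord lam nu z = Re (cnj nu * (z - lam))"

definition gamma_l_plus :: "complex set \<Rightarrow> complex \<Rightarrow> complex \<Rightarrow> ereal" where
  "gamma_l_plus \<Omega> lam nu = Lim (at_right 0) (\<lambda>\<epsilon>::real.
     INF z \<in> {z \<in> frontier \<Omega>. cmod (z - lam) \<le> \<epsilon> \<and> xi_coord lam nu z > 0}.
       ereal (eta_coord lam nu z / (xi_coord lam nu z)\<^sup>2))"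

definition gamma_l_minus :: "complex set \<Rightarrow> complex \<Rightarrow> complex \<Rightarrow> ereal" where
  "gamma_l_minus \<Omega> lam nu = Lim (at_right 0) (\<lambda>\<epsilon>::real.
     INF z \<in> {z \<in> frontier \<Omega>. cmod (z - lam) \<le> \<epsilon> \<and> xi_coord lam nu z < 0}.
       ereal (eta_coord lam nu z / (xi_coord lam nu z)\<^sup>2))"

definition unilateral_infinite_curvature :: "complex set \<Rightarrow> complex \<Rightarrow> bool" where
  "unilateral_infinite_curvature \<Omega> lam \<longleftrightarrow>
     (\<exists>nu. l_normal \<Omega> lam nu \<and> (gamma_l_plus \<Omega> lam nu = \<infinity> \<or> gamma_l_minus \<Omega> lam nu = \<infinity>))"

end

theory Submission
  imports Defs
begin


lemma cinner_add_right: "cinner (x::'a::complex_inner) (y + z) = cinner x y + cinner x z"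
  by (metis cinner_add_left cinner_commute complex_cnj_add)

lemma cinner_scaleC_right: "cinner (x::'a::complex_inner) (scaleC c y) = cnj c * cinner x y"
  by (metis cinner_commute cinner_scaleC_left complex_cnj_cnj complex_cnj_mult)

lemma scaleC_minus1: "scaleC (-1) (x::'a::complex_vector) = - x"
  using scaleR_scaleC[of "-1" x] by simp

lemma cinner_minus_left: "cinner (- (x::'a::complex_inner)) y = - cinner x y"
  by (metis cinner_scaleC_left mult_minus1 scaleC_minus1)

lemma cinner_diff_left: "cinner ((x::'a::complex_inner) - y) z = cinner x z - cinner y z"
  by (metis cinner_add_left cinner_minus_left diff_conv_add_uminus)

lemma cinner_self: "cinner (x::'a::complex_inner) x = complex_of_real ((norm x)^2)"
proof -
  have "Im (cinner x x) = Im (cnj (cinner x x))" using cinner_commute[of x x] by metis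
  then have "Im (cinner x x) = 0" by simp
  moreover have "Re (cinner x x) = (norm x)^2"
    using norm_eq_sqrt_cinner[of x] cinner_self_nonneg[of x] by simp
  ultimately show ?thesis by (simp add: complex_eq_iff)
qed

lemma norm_scaleC: "norm (scaleC c (x::'a::complex_inner)) = cmod c * norm x"
proof -
  have "(norm (scaleC c x))^2 = Re (cinner (scaleC c x) (scaleC c x))"
    using cinner_self[of "scaleC c x"] by simp
  also have "cinner (scaleC c x) (scaleC c x) = (c * cnj c) * complex_of_real ((norm x)^2)"
    by (simp only: cinner_scaleC_left cinner_scaleC_right cinner_self[of x] mult.assoc mult.left_commute)
  also have "(c * cnj c) = complex_of_real ((cmod c)^2)" by (rule complex_norm_square[symmetric])
  finally have "(norm (scaleC c x))^2 = Re (complex_of_real ((cmod c)^2) * complex_of_real ((norm x)^2))" .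
  also have "\<dots> = (cmod c)^2 * (norm x)^2" by (simp only: of_real_mult[symmetric] Re_complex_of_real)
  finally have "(norm (scaleC c x))^2 = (cmod c * norm x)^2" by (simp add: power_mult_distrib)
  then show ?thesis by (simp add: power2_eq_iff_nonneg)
qed

lemma re_cinner_bound: "\<bar>Re (cinner (x::'a::complex_inner) y)\<bar> \<le> (norm x + norm y)^2"
proof -
  have e: "(norm (x+y))^2 = (norm x)^2 + (norm y)^2 + 2 * Re (cinner x y)"
  proof -
    have "(norm (x+y))^2 = Re (cinner (x+y) (x+y))" using cinner_self[of "x+y"] by simp
    also have "\<dots> = Re (cinner x x) + Re (cinner y y) + Re (cinner x y) + Re (cinner y x)"
      by (simp add: cinner_add_left cinner_add_right)
    also have "Re (cinner y x) = Re (cinner x y)" using cinner_commute[of y x] by simp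
    finally show ?thesis using cinner_self[of x] cinner_self[of y] by simp
  qed
  have t: "norm (x+y) \<le> norm x + norm y" by (rule norm_triangle_ineq)
  have "(norm (x+y))^2 \<le> (norm x + norm y)^2" using t by (simp add: power_mono)
  then show ?thesis using e
    by (smt (verit, best) norm_ge_zero power2_sum zero_le_mult_iff zero_le_power2)
qed

lemma cinner_bound: "cmod (cinner (x::'a::complex_inner) y) \<le> 2 * (norm x + norm y)^2"
proof -
  have "cinner x (scaleC \<i> y) = - \<i> * cinner x y" by (simp add: cinner_scaleC_right)
  then have "Re (cinner x (scaleC \<i> y)) = Im (cinner x y)" by simp
  then have "\<bar>Im (cinner x y)\<bar> \<le> (norm x + norm y)^2"
    using re_cinner_bound[of x "scaleC \<i> y"] by (simp add: norm_scaleC)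
  then show ?thesis using re_cinner_bound[of x y] cmod_le[of "cinner x y"] by linarith
qed

lemma scaleC_minus_right: "scaleC c (- (x::'a::complex_vector)) = - scaleC c x"
  by (metis mult.commute scaleC_minus1 scaleC_scaleC)

lemma scaleC_diff_right: "scaleC c ((x::'a::complex_vector) - y) = scaleC c x - scaleC c y"
  by (metis diff_conv_add_uminus scaleC_add_right scaleC_minus_right)

lemma op_lin:
  assumes "csubspace D" "clinear_on D A" "f \<in> D" "h \<in> D"
  shows "A (f + scaleC z h) - scaleC lam (f + scaleC z h)
       = (A f - scaleC lam f) + scaleC z (A h - scaleC lam h)"
proof -
  have "scaleC z h \<in> D" using assms(1,4) unfolding csubspace_def by blast
  then have "A (f + scaleC z h) = A f + scaleC z (A h)"
    using assms unfolding clinear_on_def by metis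
  moreover have "scaleC lam (scaleC z h) = scaleC z (scaleC lam h)"
    by (simp add: scaleC_scaleC mult.commute)
  ultimately show ?thesis
    by (simp add: scaleC_add_right scaleC_diff_right algebra_simps)
qed

lemma expand:
  assumes "csubspace D" "clinear_on D A" "f \<in> D" "h \<in> D"
  shows "cinner (A (f + scaleC z h) - scaleC lam (f + scaleC z h)) (f + scaleC z h)
       = cinner (A f - scaleC lam f) f + cnj z * cinner (A f - scaleC lam f) h
         + z * cinner (A h - scaleC lam h) f + z * cnj z * cinner (A h - scaleC lam h) h"
  unfolding op_lin[OF assms]
  by (simp only: cinner_add_left cinner_add_right cinner_scaleC_left cinner_scaleC_right, simp add: algebra_simps)

lemma normalize:
  assumes "csubspace D" "clinear_on D A" "g \<in> D" "g \<noteq> 0"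
  defines "g' \<equiv> scaleC (complex_of_real (1 / norm g)) g"
  shows "g' \<in> D" "norm g' = 1"
    "cinner (A g') g' - lam = cinner (A g - scaleC lam g) g / complex_of_real ((norm g)^2)"
proof -
  let ?c = "complex_of_real (1 / norm g)"
  show "g' \<in> D" using assms unfolding csubspace_def g'_def by blast
  have ng: "norm g > 0" using assms(4) by simp
  show n1: "norm g' = 1" unfolding g'_def norm_scaleC using ng by (simp add: norm_divide)
  have "A g' = scaleC ?c (A g)" using assms unfolding clinear_on_def g'_def by blast
  then have "A g' - scaleC lam g' = scaleC ?c (A g - scaleC lam g)"
    unfolding g'_def by (simp add: scaleC_diff_right scaleC_scaleC mult.commute)
  then have "cinner (A g' - scaleC lam g') g' = ?c * cnj ?c * cinner (A g - scaleC lam g) g"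
    unfolding g'_def by (simp add: cinner_scaleC_left cinner_scaleC_right)
  also have "\<dots> = cinner (A g - scaleC lam g) g / complex_of_real ((norm g)^2)"
    by (simp add: power2_eq_square divide_simps)
  finally have e: "cinner (A g' - scaleC lam g') g' = cinner (A g - scaleC lam g) g / complex_of_real ((norm g)^2)" .
  have "cinner (A g' - scaleC lam g') g' = cinner (A g') g' - lam"
    using n1 by (simp add: cinner_diff_left cinner_scaleC_left cinner_self)
  then show "cinner (A g') g' - lam = cinner (A g - scaleC lam g) g / complex_of_real ((norm g)^2)"
    using e by simp
qed

lemma arith_core:
  fixes rw iw ra ia rb ib \<tau> K \<sigma> n2 ReQ ImQ :: real
  assumes a: "\<bar>rw\<bar> \<le> \<tau>^2" "\<bar>iw\<bar> \<le> \<tau>^2" "\<bar>rb\<bar> \<le> K" "\<bar>ib\<bar> \<le> K" "0 < \<tau>" "\<tau> * (2 + 2*K) \<le> 1"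
    and i1: "0 \<le> rw + \<tau> * ra + \<tau>^2 * rb" and i2: "0 \<le> rw - \<tau> * ra + \<tau>^2 * rb"
    and i3: "0 \<le> rw + \<tau> * ia + \<tau> + \<tau>^2 * rb" and i4: "0 \<le> rw - \<tau> * ia - \<tau> + \<tau>^2 * rb"
    and s: "\<sigma> = 1 \<or> \<sigma> = -1" and n: "1/4 \<le> n2" "n2 \<le> 9/4"
    and R: "ReQ = rw + \<sigma> * \<tau> * ra + \<tau>^2 * rb" and I: "ImQ = iw + \<sigma> * \<tau> * ia - \<sigma> * \<tau> + \<tau>^2 * ib"
    and R0: "0 \<le> ReQ"
  shows "\<sigma> * (- ImQ / n2) > 0" "ReQ / n2 \<le> 5*(1+K) * (- ImQ / n2)^2" "\<bar>ReQ\<bar> + \<bar>ImQ\<bar> \<le> 4*\<tau>"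
proof -
  have K0: "0 \<le> K" using a(3) by linarith
  have t2: "0 \<le> \<tau>^2" by simp
  have p1: "\<tau>^2 * rb \<le> \<tau>^2 * K" "\<tau>^2 * ib \<le> \<tau>^2 * K" "- (\<tau>^2 * K) \<le> \<tau>^2 * ib"
    using mult_left_mono[OF _ t2, of rb K] mult_left_mono[OF _ t2, of ib K] mult_left_mono[OF _ t2, of "-K" ib] a(3,4)
    by auto
  have p2: "\<tau>^2 * (2 + 2*K) \<le> \<tau>"
    using mult_left_mono[OF a(6), of \<tau>] a(5) by (simp add: power2_eq_square algebra_simps)
  have p2': "2*\<tau>^2 + 2*(\<tau>^2*K) \<le> \<tau>" using p2 by (simp add: algebra_simps)
  have key: "\<sigma> * (- ImQ) \<ge> \<tau> \<and> \<bar>ImQ\<bar> \<le> 3 * \<tau> \<and> ReQ \<le> 2*\<tau>^2 + 2*(\<tau>^2*K)"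
    using s
  proof
    assume s1: "\<sigma> = 1"
    have R': "ReQ = rw + \<tau> * ra + \<tau>^2 * rb" and I': "ImQ = iw + \<tau> * ia - \<tau> + \<tau>^2 * ib"
      using R I s1 by simp_all
    show ?thesis using s1 R' I' a p1 p2' i1 i2 i3 i4 unfolding abs_le_iff s1 by (intro conjI; linarith)
  next
    assume s1: "\<sigma> = -1"
    have R': "ReQ = rw - \<tau> * ra + \<tau>^2 * rb" and I': "ImQ = iw - \<tau> * ia + \<tau> + \<tau>^2 * ib"
      using R I s1 by simp_all
    show ?thesis using s1 R' I' a p1 p2' i1 i2 i3 i4 unfolding abs_le_iff s1 by (intro conjI; linarith)
  qed
  have ImQa: "\<bar>ImQ\<bar> \<ge> \<tau>" using key s by auto
  have n0: "0 < n2" using n by linarith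
  have "\<sigma> * (- ImQ) > 0" using key a(5) by linarith
  then show "\<sigma> * (- ImQ / n2) > 0" using n0 by (metis divide_pos_pos times_divide_eq_right)
  show "\<bar>ReQ\<bar> + \<bar>ImQ\<bar> \<le> 4*\<tau>" using key R0 p2' by linarith
  have "ReQ * n2 \<le> (2*\<tau>^2 + 2*(\<tau>^2*K)) * (9/4)"
    using mult_mono[of ReQ "2*\<tau>^2 + 2*(\<tau>^2*K)" n2 "9/4"] key R0 n K0 by simp
  also have "\<dots> \<le> 5*(1+K) * \<tau>^2"
  proof -
    have "0 \<le> \<tau>^2 * K" using K0 t2 by simp
    have d: "5*(1+K)*\<tau>^2 - (2*\<tau>^2 + 2*(\<tau>^2*K))*(9/4) = (1+K)*\<tau>^2/2"
      by (simp add: algebra_simps)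
    have "0 \<le> (1+K)*\<tau>^2/2" using K0 by simp
    then show ?thesis using d by linarith
  qed
  also have "\<dots> \<le> 5*(1+K) * ImQ^2"
    using mult_left_mono[OF power_mono[OF _ _, of \<tau> "\<bar>ImQ\<bar>" 2], of "5*(1+K)"] ImQa a(5) K0 by simp
  finally have *: "ReQ * n2 \<le> 5*(1+K) * ImQ^2" .
  have "ReQ / n2 = (ReQ * n2) / n2^2" using n0 by (simp add: power2_eq_square)
  also have "\<dots> \<le> 5*(1+K) * ImQ^2 / n2^2" using * n0 by (simp add: divide_right_mono)
  also have "\<dots> = 5*(1+K) * (- ImQ / n2)^2" by (simp add: power_divide)
  finally show "ReQ / n2 \<le> 5*(1+K) * (- ImQ / n2)^2" .
qed

lemma point_exists:
  fixes D :: "'a::complex_inner set" and A :: "'a \<Rightarrow> 'a" and lam nu :: complex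
    and f h :: 'a and \<tau> K \<sigma> :: real
  assumes D: "csubspace D" "clinear_on D A" and nu: "cmod nu = 1"
    and nonneg: "\<And>x. x \<in> D \<Longrightarrow> 0 \<le> Re (cnj nu * cinner (A x - scaleC lam x) x)"
    and f: "f \<in> D" "norm f = 1" and h: "h \<in> D" "A h - scaleC lam h = scaleC (- \<i> * nu) f"
    and hK: "norm h \<le> K" and bK: "cmod (cinner f h) \<le> K"
    and w: "cmod (cnj nu * cinner (A f - scaleC lam f) f) \<le> \<tau>^2"
    and tau: "0 < \<tau>" "\<tau> * (2 + 2*K) \<le> 1" and s: "\<sigma> = 1 \<or> \<sigma> = -1"
  shows "\<exists>z\<in>Num D A. cmod (z - lam) \<le> 16*\<tau> \<and> \<sigma> * xi_coord lam nu z > 0 \<and>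
           eta_coord lam nu z \<le> 5*(1+K) * (xi_coord lam nu z)^2"
proof -
  define u where "u = A f - scaleC lam f"
  define w where "w = cnj nu * cinner u f"
  define a where "a = cnj nu * cinner u h"
  define b where "b = - \<i> * cinner f h"
  have nn: "cnj nu * nu = 1"
    using complex_norm_square[of nu] nu by (simp add: mult.commute)
  have ff: "cinner f f = 1" using cinner_self[of f] f(2) by simp
  have Q: "cnj nu * cinner (A (f + scaleC z h) - scaleC lam (f + scaleC z h)) (f + scaleC z h)
        = w + cnj z * a - \<i> * z + z * cnj z * b" for z
  proof -
    have "cnj nu * cinner (A (f + scaleC z h) - scaleC lam (f + scaleC z h)) (f + scaleC z h)
       = cnj nu * (cinner u f + cnj z * cinner u h + z * ((- \<i> * nu) * 1)
           + z * cnj z * ((- \<i> * nu) * cinner f h))"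
      unfolding expand[OF D f(1) h(1)] h(2) u_def by (simp add: cinner_scaleC_left ff)
    also have "\<dots> = w + cnj z * a + z * (- \<i>) * (cnj nu * nu) + z * cnj z * (- \<i>) * (cnj nu * nu) * cinner f h"
      unfolding w_def a_def by (simp add: algebra_simps)
    finally show ?thesis unfolding nn b_def by (simp add: algebra_simps)
  qed
  have inD: "f + scaleC z h \<in> D" for z using D(1) f(1) h(1) unfolding csubspace_def by blast
  have QR: "0 \<le> Re (w + cnj z * a - \<i> * z + z * cnj z * b)" for z
    using nonneg[OF inD[of z]] unfolding Q .
  have i1: "0 \<le> Re w + \<tau> * Re a + \<tau>^2 * Re b"
    using QR[of "complex_of_real \<tau>"] by (simp add: power2_eq_square)
  have i2: "0 \<le> Re w - \<tau> * Re a + \<tau>^2 * Re b"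
    using QR[of "complex_of_real (-\<tau>)"] by (simp add: power2_eq_square)
  have i3: "0 \<le> Re w + \<tau> * Im a + \<tau> + \<tau>^2 * Re b"
    using QR[of "\<i> * complex_of_real \<tau>"] by (simp add: power2_eq_square)
  have i4: "0 \<le> Re w - \<tau> * Im a - \<tau> + \<tau>^2 * Re b"
    using QR[of "\<i> * complex_of_real (-\<tau>)"] by (simp add: power2_eq_square)
  have bb: "cmod b \<le> K" using bK unfolding b_def by (simp add: norm_mult)
  define t where "t = \<sigma> * \<tau>"
  have t2: "t^2 = \<tau>^2" "\<bar>t\<bar> = \<tau>" using s tau unfolding t_def by auto
  define g where "g = f + scaleC (complex_of_real t) h"
  have gD: "g \<in> D" unfolding g_def by (rule inD)
  have K0: "0 \<le> K" using hK norm_ge_zero order_trans by blast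
  have tK: "\<tau> * K \<le> 1/2" using tau K0 by (simp add: algebra_simps)
  have nth: "norm (scaleC (complex_of_real t) h) \<le> 1/2"
  proof -
    have "norm (scaleC (complex_of_real t) h) = \<tau> * norm h" using t2 by (simp add: norm_scaleC)
    also have "\<dots> \<le> \<tau> * K" using hK tau by (simp add: mult_left_mono)
    finally show ?thesis using tK by linarith
  qed
  have ng1: "norm g \<ge> 1/2"
    using norm_diff_ineq[of f "scaleC (complex_of_real t) h"] nth f(2) unfolding g_def by simp
  have ng2: "norm g \<le> 3/2"
    using norm_triangle_ineq[of f "scaleC (complex_of_real t) h"] nth f(2) unfolding g_def by simp
  have g0: "g \<noteq> 0" using ng1 by auto
  define n2 where "n2 = (norm g)^2"
  have n2b: "1/4 \<le> n2" "n2 \<le> 9/4"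
    using power_mono[OF ng1, of 2] power_mono[OF ng2, of 2] unfolding n2_def by (simp_all add: power2_eq_square)
  define Qg where "Qg = w + complex_of_real t * a - \<i> * complex_of_real t + complex_of_real (t^2) * b"
  have QgE: "cnj nu * cinner (A g - scaleC lam g) g = Qg"
    unfolding g_def Q Qg_def by (simp add: power2_eq_square)
  define g' where "g' = scaleC (complex_of_real (1 / norm g)) g"
  note nz = normalize(1,2)[OF D gD g0, folded g'_def] normalize(3)[OF D gD g0, of lam, folded g'_def]
  define z where "z = cinner (A g') g'"
  have zN: "z \<in> Num D A" unfolding Num_def z_def using nz by blast
  have zq: "cnj nu * (z - lam) = Qg / complex_of_real n2"
    unfolding z_def nz(3) n2_def QgE[symmetric] by simp
  have xi: "xi_coord lam nu z = - Im Qg / n2"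
  proof -
    have "xi_coord lam nu z = Re (\<i> * (cnj nu * (z - lam)))" unfolding xi_coord_def by (simp add: mult.assoc)
    then show ?thesis unfolding zq by (simp add: Re_divide_of_real Im_divide_of_real)
  qed
  have eta: "eta_coord lam nu z = Re Qg / n2"
    unfolding eta_coord_def zq by (simp add: Re_divide_of_real)
  have cm: "cmod (z - lam) = cmod Qg / n2"
  proof -
    have "cmod (z - lam) = cmod (cnj nu * (z - lam))" using nu by (simp add: norm_mult)
    then show ?thesis unfolding zq using n2b by (simp add: norm_divide)
  qed
  have R0: "0 \<le> Re Qg" using nonneg[OF gD] QgE by simp
  have ReQ: "Re Qg = Re w + \<sigma> * \<tau> * Re a + \<tau>^2 * Re b" unfolding Qg_def t2(1)[symmetric] t_def
    by simp
  have ImQ: "Im Qg = Im w + \<sigma> * \<tau> * Im a - \<sigma> * \<tau> + \<tau>^2 * Im b" unfolding Qg_def t2(1)[symmetric] t_def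
    by simp
  have wb: "\<bar>Re w\<bar> \<le> \<tau>^2" "\<bar>Im w\<bar> \<le> \<tau>^2" "\<bar>Re b\<bar> \<le> K" "\<bar>Im b\<bar> \<le> K"
    using w bb abs_Re_le_cmod[of w] abs_Im_le_cmod[of w] abs_Re_le_cmod[of b] abs_Im_le_cmod[of b]
    unfolding w_def u_def by linarith+
  note ac = arith_core[OF wb tau i1 i2 i3 i4 s n2b ReQ ImQ R0]
  have "cmod Qg \<le> 4 * \<tau>" using cmod_le[of Qg] ac(3) by linarith
  moreover have "4*\<tau> \<le> 16*\<tau>*n2"
  proof -
    have e: "16*\<tau>*n2 - 4*\<tau> = 4*\<tau>*(4*n2 - 1)" by (simp add: algebra_simps)
    have "0 \<le> 4*\<tau>*(4*n2 - 1)" using tau n2b by simp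
    then show ?thesis using e by linarith
  qed
  ultimately have "cmod (z - lam) \<le> 16 * \<tau>" unfolding cm using n2b
    by (simp add: divide_simps)
  then show ?thesis using zN ac(1,2) xi eta by (intro bexI[of _ z]) auto
qed



lemma coords:
  "eta_coord lam nu p = Re (cnj nu * (p - lam))" "xi_coord lam nu p = - Im (cnj nu * (p - lam))"
  unfolding eta_coord_def xi_coord_def by (simp_all add: mult.assoc)

lemma frontier_proj:
  assumes cl: "closed \<Omega>" and nu: "cmod nu = 1" and pos: "\<And>p. p \<in> \<Omega> \<Longrightarrow> 0 \<le> eta_coord lam nu p"
    and z: "z \<in> \<Omega>"
  shows "\<exists>q\<in>frontier \<Omega>. xi_coord lam nu q = xi_coord lam nu z \<and> 0 \<le> eta_coord lam nu q \<and>
           eta_coord lam nu q \<le> eta_coord lam nu z \<and> cmod (q - lam) \<le> cmod (z - lam)"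
proof -
  have nn: "cnj nu * nu = 1"
    using complex_norm_square[of nu] nu by (simp add: mult.commute)
  define e where "e = eta_coord lam nu z"
  have e0: "0 \<le> e" using pos[OF z] e_def by simp
  define z' where "z' = z - nu * complex_of_real (e + 1)"
  have sh: "cnj nu * (z - nu * complex_of_real r - lam) = cnj nu * (z - lam) - complex_of_real r" for r
  proof -
    have "cnj nu * (z - nu * complex_of_real r - lam) = cnj nu * (z - lam) - (cnj nu * nu) * complex_of_real r"
      by (simp add: algebra_simps)
    then show ?thesis unfolding nn by simp
  qed
  have "eta_coord lam nu z' = -1" unfolding z'_def coords sh using e_def coords by simp
  then have z'n: "z' \<notin> \<Omega>" using pos by force
  obtain q where q: "q \<in> closed_segment z z'" "q \<in> frontier \<Omega>"
    using connected_Int_frontier[of "closed_segment z z'" \<Omega>] z z'n by blast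
  obtain u where u: "0 \<le> u" "u \<le> 1" "q = (1 - u) *\<^sub>R z + u *\<^sub>R z'"
    using q(1) unfolding closed_segment_def by blast
  have qe: "q = z - nu * complex_of_real (u * (e + 1))"
    unfolding u(3) z'_def by (simp add: scaleR_conv_of_real algebra_simps)
  have X: "cnj nu * (q - lam) = cnj nu * (z - lam) - complex_of_real (u * (e + 1))"
    unfolding qe sh ..
  have xq: "xi_coord lam nu q = xi_coord lam nu z" unfolding coords X by simp
  have eq: "eta_coord lam nu q = e - u * (e + 1)" unfolding coords X e_def by simp
  have qO: "q \<in> \<Omega>" using q(2) cl frontier_subset_closed by blast
  have eq0: "0 \<le> eta_coord lam nu q" using pos[OF qO] .
  have ue: "0 \<le> u * (e + 1)" using u e0 by simp
  have eqz: "eta_coord lam nu q \<le> e" using eq ue by linarith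
  have "cmod (q - lam) = cmod (cnj nu * (q - lam))" using nu by (simp add: norm_mult)
  also have "\<dots> = sqrt ((eta_coord lam nu q)^2 + (xi_coord lam nu q)^2)"
    by (simp only: coords power2_minus cmod_def)
  also have "\<dots> \<le> sqrt (e^2 + (xi_coord lam nu z)^2)"
    using power_mono[OF eqz eq0] xq by simp
  also have "\<dots> = cmod (cnj nu * (z - lam))" by (simp only: e_def coords power2_minus cmod_def)
  also have "\<dots> = cmod (z - lam)" using nu by (simp add: norm_mult)
  finally show ?thesis using q(2) xq eq0 eqz e_def by blast
qed

lemma gamma_finite:
  assumes H: "\<And>\<epsilon>. \<epsilon> > 0 \<Longrightarrow> \<exists>z\<in>frontier \<Omega>. cmod (z - lam) \<le> \<epsilon> \<and> P (xi_coord lam nu z) \<and>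
                  eta_coord lam nu z / (xi_coord lam nu z)^2 \<le> M"
  shows "Lim (at_right 0) (\<lambda>\<epsilon>::real. INF z \<in> {z \<in> frontier \<Omega>. cmod (z - lam) \<le> \<epsilon> \<and> P (xi_coord lam nu z)}.
           ereal (eta_coord lam nu z / (xi_coord lam nu z)\<^sup>2)) \<noteq> \<infinity>"
proof -
  define G where "G = (\<lambda>\<epsilon>::real. INF z \<in> {z \<in> frontier \<Omega>. cmod (z - lam) \<le> \<epsilon> \<and> P (xi_coord lam nu z)}.
           ereal (eta_coord lam nu z / (xi_coord lam nu z)\<^sup>2))"
  have mono: "G e2 \<le> G e1" if "e1 \<le> e2" for e1 e2
    unfolding G_def by (rule INF_superset_mono) (use that in auto)
  have bd: "G e \<le> ereal M" if e0: "e > 0" for e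
  proof -
    obtain z where z: "z\<in>frontier \<Omega>" "cmod (z - lam) \<le> e" "P (xi_coord lam nu z)"
      "eta_coord lam nu z / (xi_coord lam nu z)^2 \<le> M" using H[OF e0] by blast
    show ?thesis unfolding G_def by (rule INF_lower2[of z]) (use z in auto)
  qed
  define S where "S = (SUP e\<in>{0<..}. G e)"
  have SM: "S \<le> ereal M" unfolding S_def using bd by (auto intro: SUP_least)
  have "(G \<longlongrightarrow> S) (at_right 0)"
  proof (rule order_tendstoI)
    fix y assume "y < S"
    then obtain e0 where e0: "e0 > 0" "y < G e0" unfolding S_def less_SUP_iff by auto
    show "eventually (\<lambda>e. y < G e) (at_right 0)"
      unfolding eventually_at_right[OF e0(1)]
      using e0 mono by (intro exI[of _ e0]) (auto intro: less_le_trans)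
  next
    fix y assume "S < y"
    have "eventually (\<lambda>e. 0 < e) (at_right (0::real))" by (rule eventually_at_right_less)
    then show "eventually (\<lambda>e. G e < y) (at_right 0)"
    proof (rule eventually_mono)
      fix e :: real assume "0 < e"
      then have "G e \<le> S" unfolding S_def by (auto intro: SUP_upper)
      then show "G e < y" using \<open>S < y\<close> by simp
    qed
  qed
  then have "Lim (at_right 0) G = S" by (intro tendsto_Lim) simp_all
  then show ?thesis using SM unfolding G_def by auto
qed


lemma cinner_zero_right: "cinner (x::'a::complex_inner) 0 = 0"
proof -
  have "scaleC 0 (0::'a) = 0" using scaleR_scaleC[of 0 "0::'a"] by simp
  then show ?thesis using cinner_scaleC_right[of x 0 0] by simp
qed

theorem mainTheorem3:
  fixes D :: "'a::chilbert_space set" and A :: "'a \<Rightarrow> 'a" and lam :: complex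
  assumes "csubspace D" and "clinear_on D A"
    and "densely_defined D" and "closed_operator D A"
    and "interior (Num D A) \<noteq> {}" and "Num D A \<noteq> UNIV"
    and "D \<subseteq> adj_dom D A"
    and "lam \<in> frontier (Num D A)"
    and "unilateral_infinite_curvature (closure (Num D A)) lam"
  shows "lam \<in> op_spectrum D A"
proof (rule ccontr)
  assume "lam \<notin> op_spectrum D A"
  then have res: "lam \<in> op_resolvent D A" unfolding op_spectrum_def by blast
  have surj: "\<exists>h\<in>D. A h - scaleC lam h = y" for y
  proof -
    have "(\<lambda>x. A x - scaleC lam x) ` D = UNIV" using res unfolding op_resolvent_def bij_betw_def by blast
    then have "y \<in> (\<lambda>x. A x - scaleC lam x) ` D" by simp
    then show ?thesis by blast
  qed
  obtain C where C: "\<And>x. x \<in> D \<Longrightarrow> norm x \<le> C * norm (A x - scaleC lam x)"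
    using res unfolding op_resolvent_def by blast
  define \<Omega> where "\<Omega> = closure (Num D A)"
  obtain nu where lnu: "l_normal \<Omega> lam nu"
    and inf: "gamma_l_plus \<Omega> lam nu = \<infinity> \<or> gamma_l_minus \<Omega> lam nu = \<infinity>"
    using assms(9) unfolding unilateral_infinite_curvature_def \<Omega>_def by blast
  have sup: "cmod nu = 1 \<and> (\<forall>z\<in>\<Omega>. 0 \<le> Re (cnj nu * (z - lam)))"
  proof (cases "corner_point \<Omega> lam")
    case True
    then obtain alpha where al: "cmod nu = 1" "0 \<le> alpha" "alpha < pi/2" "\<Omega> \<subseteq> sector lam nu alpha"
      using lnu unfolding l_normal_def by auto
    have c0: "0 \<le> cos alpha" using al by (intro cos_ge_zero) auto
    show ?thesis
    proof (intro conjI ballI)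
      fix z assume "z \<in> \<Omega>"
      then have "cos alpha * cmod (z - lam) \<le> Re (cnj nu * (z - lam))"
        using al(4) unfolding sector_def by blast
      moreover have "0 \<le> cos alpha * cmod (z - lam)" using c0 by simp
      ultimately show "0 \<le> Re (cnj nu * (z - lam))" by linarith
    qed (use al in auto)
  next
    case False
    then show ?thesis using lnu unfolding l_normal_def supporting_normal_def by auto
  qed
  have nu: "cmod nu = 1" using sup by blast
  have posO: "0 \<le> eta_coord lam nu p" if "p \<in> \<Omega>" for p
    using sup that unfolding eta_coord_def by blast
  have clO: "closed \<Omega>" unfolding \<Omega>_def by simp
  have NO: "Num D A \<subseteq> \<Omega>" unfolding \<Omega>_def by (rule closure_subset)
  have nonneg: "0 \<le> Re (cnj nu * cinner (A x - scaleC lam x) x)" if xD: "x \<in> D" for x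
  proof (cases "x = 0")
    case True
    then show ?thesis by (simp add: cinner_zero_right)
  next
    case False
    define g' where "g' = scaleC (complex_of_real (1 / norm x)) x"
    note nz = normalize(1,2)[OF assms(1,2) xD False, folded g'_def]
      normalize(3)[OF assms(1,2) xD False, of lam, folded g'_def]
    have "cinner (A g') g' \<in> \<Omega>" using nz NO unfolding Num_def by blast
    then have "0 \<le> Re (cnj nu * (cinner (A g') g' - lam))" using sup by blast
    also have "cnj nu * (cinner (A g') g' - lam)
        = (cnj nu * cinner (A x - scaleC lam x) x) / complex_of_real ((norm x)^2)"
      unfolding nz(3) by simp
    finally have "0 \<le> Re (cnj nu * cinner (A x - scaleC lam x) x) / (norm x)^2"
      by (simp add: Re_divide_of_real)
    moreover have "0 < (norm x)^2" using False by simp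
    ultimately show ?thesis by (simp add: zero_le_divide_iff)
  qed
  define K where "K = 2 * (1 + \<bar>C\<bar>)^2"
  define M where "M = 5 * (1 + K)"
  have K1: "\<bar>C\<bar> \<le> K"
  proof -
    have "\<bar>C\<bar> \<le> 1 + \<bar>C\<bar>" by simp
    also have "\<dots> \<le> (1 + \<bar>C\<bar>)^2"
      using mult_left_mono[of 1 "1 + \<bar>C\<bar>" "1 + \<bar>C\<bar>"] by (simp add: power2_eq_square)
    finally show ?thesis unfolding K_def by simp
  qed
  have K0: "0 \<le> K" unfolding K_def by simp
  have main: "\<exists>q\<in>frontier \<Omega>. cmod (q - lam) \<le> \<epsilon> \<and> \<sigma> * xi_coord lam nu q > 0 \<and>
                eta_coord lam nu q / (xi_coord lam nu q)^2 \<le> M"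
    if e: "\<epsilon> > 0" and s: "\<sigma> = 1 \<or> \<sigma> = -1" for \<epsilon> \<sigma> :: real
  proof -
    define \<tau> where "\<tau> = min (\<epsilon>/16) (1 / (2 + 2*K))"
    have tau0: "0 < \<tau>" unfolding \<tau>_def using e K0 by simp
    have tau1: "\<tau> * (2 + 2*K) \<le> 1"
    proof -
      have "\<tau> \<le> 1 / (2 + 2*K)" unfolding \<tau>_def by simp
      then show ?thesis using K0 by (simp add: field_simps)
    qed
    have tau2: "16 * \<tau> \<le> \<epsilon>" unfolding \<tau>_def by simp
    have "lam \<in> closure (Num D A)" using assms(8) by (simp add: frontier_def)
    then obtain z0 where z0: "z0 \<in> Num D A" "dist z0 lam < \<tau>^2"
    proof -
      have "0 < \<tau>^2" using tau0 by simp
      then show ?thesis using that \<open>lam \<in> closure (Num D A)\<close> closure_approachable[of lam "Num D A"] by blast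
    qed
    then obtain f where f: "f \<in> D" "norm f = 1" "z0 = cinner (A f) f" unfolding Num_def by blast
    have ff: "cinner f f = 1" using cinner_self[of f] f(2) by simp
    have "cinner (A f - scaleC lam f) f = z0 - lam"
      using f(3) ff by (simp add: cinner_diff_left cinner_scaleC_left)
    then have w: "cmod (cnj nu * cinner (A f - scaleC lam f) f) \<le> \<tau>^2"
      using z0(2) nu by (simp add: norm_mult dist_norm)
    obtain h where h: "h \<in> D" "A h - scaleC lam h = scaleC (- \<i> * nu) f"
      using surj by blast
    have nh: "norm h \<le> \<bar>C\<bar>"
    proof -
      have "norm h \<le> C * norm (scaleC (- \<i> * nu) f)" using C[OF h(1)] h(2) by simp
      also have "norm (scaleC (- \<i> * nu) f) = 1" using nu f(2) by (simp add: norm_scaleC norm_mult)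
      finally show ?thesis by simp
    qed
    have hK: "norm h \<le> K" using nh K1 by linarith
    have bK: "cmod (cinner f h) \<le> K"
    proof -
      have "cmod (cinner f h) \<le> 2 * (norm f + norm h)^2" by (rule cinner_bound)
      also have "\<dots> \<le> K" unfolding K_def f(2)
        using nh by (simp add: power_mono)
      finally show ?thesis .
    qed
    obtain z where z: "z \<in> Num D A" "cmod (z - lam) \<le> 16*\<tau>" "\<sigma> * xi_coord lam nu z > 0"
      "eta_coord lam nu z \<le> M * (xi_coord lam nu z)^2"
      using point_exists[OF assms(1,2) nu nonneg f(1,2) h hK bK w tau0 tau1 s] unfolding M_def by blast
    obtain q where q: "q \<in> frontier \<Omega>" "xi_coord lam nu q = xi_coord lam nu z"
      "0 \<le> eta_coord lam nu q" "eta_coord lam nu q \<le> eta_coord lam nu z" "cmod (q - lam) \<le> cmod (z - lam)"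
      using frontier_proj[OF clO nu posO] z(1) NO by blast
    have xi0: "0 < (xi_coord lam nu z)^2" using z(3) by auto
    have "eta_coord lam nu q / (xi_coord lam nu q)^2 \<le> M"
      unfolding q(2) using q(4) z(4) xi0 by (simp add: divide_simps)
    then show ?thesis using q z tau2 by (intro bexI[of _ q]) auto
  qed
  have "gamma_l_plus \<Omega> lam nu \<noteq> \<infinity>"
    unfolding gamma_l_plus_def
  proof (rule gamma_finite[where P="\<lambda>x. 0 < x" and M=M])
    fix \<epsilon> :: real assume "\<epsilon> > 0"
    then show "\<exists>z\<in>frontier \<Omega>. cmod (z - lam) \<le> \<epsilon> \<and> 0 < xi_coord lam nu z \<and>
        eta_coord lam nu z / (xi_coord lam nu z)^2 \<le> M"
      using main[of \<epsilon> 1] by simp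
  qed
  moreover have "gamma_l_minus \<Omega> lam nu \<noteq> \<infinity>"
    unfolding gamma_l_minus_def
  proof (rule gamma_finite[where P="\<lambda>x. x < 0" and M=M])
    fix \<epsilon> :: real assume "\<epsilon> > 0"
    then show "\<exists>z\<in>frontier \<Omega>. cmod (z - lam) \<le> \<epsilon> \<and> xi_coord lam nu z < 0 \<and>
        eta_coord lam nu z / (xi_coord lam nu z)^2 \<le> M"
      using main[of \<epsilon> "-1"] by simp
  qed
  ultimately show False using inf by blast
qed

end
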